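(* Let $s\ge1$, $m_1,n_1>0$, and $1<n_2<m_2$. Let $n(x)=n_1(x+n_2)^N$ and $m(x)=m_1(x+m_2)^M$. If $M>\frac{N+1+s}{2}$, $0<N<1$ and $$m_2^{1-N}>\frac{m_1n_1+Mm_1^2n_1+n_1^2}{m_1^2},$$ then $$(1+n'(x))m^2(x)-(1+m'(x))m(x)n(x)-(x+1)^s n^2(x)>0\quad\text{for all }x\ge0.$$ *)

theory Defs
  imports "HOL-Analysis.Analysis"
begin

end

theory Submission
  imports Defs
begin

lemma deriv_shift_powr:
  fixes c d r x :: real
  assumes "x + d > 0"
  shows "deriv (\<lambda>x. c * (x + d) powr r) x = c * (r * (x + d) powr (r - 1))"
proof -
  have "((\<lambda>x. x + d) has_real_derivative 1) (at x)"
    by (auto intro!: derivative_eq_intros)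
  from DERIV_chain2[OF has_real_derivative_powr[OF assms] this]
  have "((\<lambda>x. (x + d) powr r) has_real_derivative r * (x + d) powr (r - 1)) (at x)"
    by simp
  then have "((\<lambda>x. c * (x + d) powr r) has_real_derivative c * (r * (x + d) powr (r - 1))) (at x)"
    by (rule DERIV_cmult)
  then show ?thesis by (rule DERIV_imp_deriv)
qed

theorem lemma4p1:
  fixes s m1 n1 m2 n2 M N :: real
    and n m :: "real \<Rightarrow> real"
  assumes "s \<ge> 1" and "m1 > 0" and "n1 > 0"
    and "1 < n2" and "n2 < m2"
    and n_def: "\<And>x. n x = n1 * (x + n2) powr N"
    and m_def: "\<And>x. m x = m1 * (x + m2) powr M"
    and "M > (N + 1 + s) / 2" and "0 < N" and "N < 1"
    and "m2 powr (1 - N) > (m1 * n1 + M * m1^2 * n1 + n1^2) / m1^2"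
  shows "\<forall>x \<ge> 0. (1 + deriv n x) * (m x)^2 - (1 + deriv m x) * m x * n x
                     - (x + 1) powr s * (n x)^2 > 0"
proof (intro allI impI)
  fix x :: real assume x: "x \<ge> 0"
  define a where "a = x + n2"
  define b where "b = x + m2"
  have a1: "a > 1" "b > 1" "a < b" using assms x by (auto simp: a_def b_def)
  have nf: "n = (\<lambda>x. n1 * (x + n2) powr N)" using n_def by auto
  have mf: "m = (\<lambda>x. m1 * (x + m2) powr M)" using m_def by auto
  have dn: "deriv n x = n1 * (N * a powr (N - 1))"
    unfolding nf a_def by (rule deriv_shift_powr) (use a1 a_def in auto)
  have dm: "deriv m x = m1 * (M * b powr (M - 1))"
    unfolding mf b_def by (rule deriv_shift_powr) (use a1 b_def in auto)
  have nx: "n x = n1 * a powr N" and mx: "m x = m1 * b powr M"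
    using n_def m_def a_def b_def by auto
  have M1: "M \<ge> 1" using assms by auto
  define B where "B = b powr (2*M - 1 + N)"
  have Bpos: "B > 0" using a1 by (simp add: B_def)
  have dnn: "deriv n x \<ge> 0" using dn assms a1 by simp
  have aN: "a powr N \<le> b powr N" using a1 assms by (intro powr_mono2) auto
  have aN0: "a powr N \<ge> 0" by simp
  have m2sq: "(m x)^2 = m1^2 * (b powr (1 - N) * B)"
  proof -
    have "(b powr M)^2 = b powr (2*M)" using a1
      by (simp add: power2_eq_square powr_add[symmetric])
    also have "\<dots> = b powr (1 - N) * B" unfolding B_def using a1
      by (simp add: powr_add[symmetric])
    finally show ?thesis by (simp add: mx power_mult_distrib)
  qed
  have T1: "m x * n x \<le> m1 * n1 * B"
  proof -
    have "m x * n x = m1 * n1 * (b powr M * a powr N)" by (simp add: mx nx)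
    also have "\<dots> \<le> m1 * n1 * (b powr M * b powr N)"
      using aN assms by (intro mult_left_mono) auto
    also have "b powr M * b powr N = b powr (M + N)" by (simp add: powr_add)
    also have "\<dots> \<le> B" unfolding B_def using a1 M1 by (intro powr_mono) auto
    finally show ?thesis using assms by (simp add: mult_left_mono)
  qed
  have T2: "deriv m x * m x * n x \<le> M * m1^2 * n1 * B"
  proof -
    have "deriv m x * m x * n x = M * m1^2 * n1 * (b powr (M - 1) * b powr M * a powr N)"
      by (simp add: dm mx nx power2_eq_square)
    also have "\<dots> \<le> M * m1^2 * n1 * (b powr (M - 1) * b powr M * b powr N)"
      using aN assms M1 by (intro mult_left_mono) auto
    also have "b powr (M - 1) * b powr M * b powr N = B"
      unfolding B_def by (simp add: powr_add[symmetric])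
    finally show ?thesis .
  qed
  have T3: "(x + 1) powr s * (n x)^2 \<le> n1^2 * B"
  proof -
    have xb: "x + 1 \<le> b" using assms b_def by auto
    have "(x + 1) powr s * (n x)^2 = n1^2 * ((x + 1) powr s * (a powr N)^2)"
      by (simp add: nx power_mult_distrib)
    also have "\<dots> \<le> n1^2 * (b powr s * (b powr N)^2)"
      using aN assms xb x a1
      by (intro mult_left_mono mult_mono powr_mono2 power_mono) auto
    also have "b powr s * (b powr N)^2 = b powr (s + 2*N)"
      by (simp add: power2_eq_square powr_add[symmetric])
    also have "\<dots> \<le> B" unfolding B_def using a1 assms by (intro powr_mono) auto
    finally show ?thesis using assms by (simp add: mult_left_mono)
  qed
  have bm: "b powr (1 - N) \<ge> m2 powr (1 - N)"
    using assms b_def x by (intro powr_mono2) auto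
  have key: "m1^2 * b powr (1 - N) > m1 * n1 + M * m1^2 * n1 + n1^2"
  proof -
    have "m1^2 * m2 powr (1 - N) > m1 * n1 + M * m1^2 * n1 + n1^2"
      using assms(11) assms(2) by (simp add: field_simps)
    moreover have "m1^2 * m2 powr (1 - N) \<le> m1^2 * b powr (1 - N)"
      using bm by (simp add: mult_left_mono)
    ultimately show ?thesis by linarith
  qed
  have main: "(m x)^2 > (m1 * n1 + M * m1^2 * n1 + n1^2) * B"
    unfolding m2sq using key Bpos by (simp add: mult.assoc[symmetric])
  have "(1 + deriv n x) * (m x)^2 \<ge> (m x)^2"
    using dnn by (simp add: algebra_simps)
  moreover have "(1 + deriv m x) * m x * n x = m x * n x + deriv m x * m x * n x"
    by (simp add: algebra_simps)
  ultimately show "(1 + deriv n x) * (m x)^2 - (1 + deriv m x) * m x * n x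
                     - (x + 1) powr s * (n x)^2 > 0"
    using T1 T2 T3 main by (simp add: algebra_simps)
qed

end
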